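(* Let $\{|1\rangle,|2\rangle,|3\rangle\}$ be the standard basis of $\mathbb{C}^3$. For $i\in\{1,2,3\}$ let $X^{(i)},Y^{(i)},Z^{(i)}$ be the operators on $\mathbb{C}^3$ acting as the Pauli matrices $X,Y,Z$ on the two-dimensional subspace spanned by $\{|k\rangle:k\neq i\}$ (with respect to the two remaining basis vectors in increasing order) and as $0$ on $|i\rangle$. Then every separable state $\rho$ on $\mathbb{C}^3\otimes\mathbb{C}^3$ satisfies $$\sum_{i,j=1}^3\Big(|\operatorname{tr}(\rho\,X^{(i)}\otimes X^{(j)})|+|\operatorname{tr}(\rho\,Y^{(i)}\otimes Y^{(j)})|+|\operatorname{tr}(\rho\,Z^{(i)}\otimes Z^{(j)})|\Big)\le4.$$
   Context: A state on $\mathbb{C}^3\otimes\mathbb{C}^3$ is separable if it is a convex combination of product states $\rho_A\otimes\rho_B$. *)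

theory Defs
  imports "HOL-Analysis.Analysis"
begin

text \<open>Operators on C^3 are complex^3^3; the standard basis vectors |1>,|2>,|3>
  correspond to the indices 0,1,2 of the numeral type 3.
  Operators on C^3 (x) C^3 are indexed by pairs (type 3 \<times> 3).\<close>

definition hermitian_mat :: "complex^'n^'n \<Rightarrow> bool" where
  "hermitian_mat A \<longleftrightarrow> (\<forall>i j. A $ i $ j = cnj (A $ j $ i))"

definition psd_mat :: "complex^'n^'n \<Rightarrow> bool" where
  "psd_mat A \<longleftrightarrow> (\<forall>v :: complex^'n.
      Im (\<Sum>i\<in>UNIV. \<Sum>j\<in>UNIV. cnj (v $ i) * A $ i $ j * v $ j) = 0 \<and>
      Re (\<Sum>i\<in>UNIV. \<Sum>j\<in>UNIV. cnj (v $ i) * A $ i $ j * v $ j) \<ge> 0)"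

definition is_state :: "complex^'n^'n \<Rightarrow> bool" where
  "is_state A \<longleftrightarrow> hermitian_mat A \<and> psd_mat A \<and> trace A = 1"

definition kron :: "complex^'n^'n \<Rightarrow> complex^'m^'m \<Rightarrow> complex^('n \<times> 'm)^('n \<times> 'm)" where
  "kron A B = (\<chi> r. \<chi> c. A $ fst r $ fst c * B $ snd r $ snd c)"

definition separable :: "complex^('n::finite \<times> 'm::finite)^('n \<times> 'm) \<Rightarrow> bool" where
  "separable \<rho> \<longleftrightarrow> (\<exists>(N::nat) (p::nat \<Rightarrow> real) (A::nat \<Rightarrow> complex^'n^'n) (B::nat \<Rightarrow> complex^'m^'m).
      (\<forall>k<N. p k \<ge> 0 \<and> is_state (A k) \<and> is_state (B k)) \<and>
      (\<Sum>k<N. p k) = 1 \<and>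
      \<rho> = (\<Sum>k<N. of_real (p k) *s kron (A k) (B k)))"

text \<open>The two basis indices different from i, in increasing order.\<close>
definition lo3 :: "3 \<Rightarrow> 3" where
  "lo3 i = (if i = 0 then 1 else 0)"
definition hi3 :: "3 \<Rightarrow> 3" where
  "hi3 i = (if i = 2 then 1 else 2)"

definition embed2 :: "3 \<Rightarrow> 3 \<Rightarrow> complex \<Rightarrow> complex \<Rightarrow> complex \<Rightarrow> complex \<Rightarrow> complex^3^3" where
  "embed2 a b m00 m01 m10 m11 = (\<chi> r c.
      (if r = a \<and> c = a then m00 else 0) + (if r = a \<and> c = b then m01 else 0) +
      (if r = b \<and> c = a then m10 else 0) + (if r = b \<and> c = b then m11 else 0))"

definition pauliX :: "3 \<Rightarrow> complex^3^3" where
  "pauliX i = embed2 (lo3 i) (hi3 i) 0 1 1 0"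
definition pauliY :: "3 \<Rightarrow> complex^3^3" where
  "pauliY i = embed2 (lo3 i) (hi3 i) 0 (- \<i>) \<i> 0"
definition pauliZ :: "3 \<Rightarrow> complex^3^3" where
  "pauliZ i = embed2 (lo3 i) (hi3 i) 1 0 0 (-1)"

end

theory Submission imports Defs begin


lemma cs3: fixes u v w :: real
  shows "(u *  v+u * w+v * w)^2 \<le> (v^2+2 * w^2) * (2 * u^2+v^2)"
proof -
  have "(v^2+2 * w^2) * (2 * u^2+v^2) - (u *  v+u * w+v * w)^2 = (v * u - w * u)^2 + (v *  v - w * u)^2 + (w *  v - w * u)^2"
    by (simp add: power2_eq_square algebra_simps)
  moreover have "(v * u - w * u)^2 + (v *  v - w * u)^2 + (w *  v - w * u)^2 \<ge> 0" by simp
  ultimately show ?thesis by linarith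
qed

lemma core_ord: fixes p q r a b c :: real
  assumes "p \<ge> q" "q \<ge> r" "r \<ge> 0" "a \<ge> 0" "b \<ge> 0" "c \<ge> 0"
    "a^2 \<le> p * q" "b^2 \<le> p * r" "c^2 \<le> q * r"
  shows "(a+b+c)^2 \<le> (q+2 * r) * (2 * p+q)"
proof -
  define u v w where "u = sqrt p" "v = sqrt q" "w = sqrt r"
  have "q \<ge> 0" "p \<ge> 0" using assms by linarith+
  then have pq: "p = u^2" "q = v^2" "r = w^2" using assms(3) unfolding u_v_w_def by simp_all
  have uvw: "u \<ge> 0" "v \<ge> 0" "w \<ge> 0" using \<open>q \<ge> 0\<close> \<open>p \<ge> 0\<close> assms(3) by (auto simp: u_v_w_def)
  have "a \<le> u *  v" using assms(7) pq uvw assms(4)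
    by (metis mult_nonneg_nonneg power_mult_distrib power2_le_imp_le)
  moreover have "b \<le> u * w" using assms(8) pq uvw assms(5)
    by (metis mult_nonneg_nonneg power_mult_distrib power2_le_imp_le)
  moreover have "c \<le> v * w" using assms(9) pq uvw assms(6)
    by (metis mult_nonneg_nonneg power_mult_distrib power2_le_imp_le)
  ultimately have "(a+b+c)^2 \<le> (u *  v+u * w+v * w)^2"
    using assms by (intro power_mono) auto
  also have "\<dots> \<le> (v^2+2 * w^2) * (2 * u^2+v^2)" by (rule cs3)
  finally show ?thesis using pq by simp
qed

lemma core_ord2: fixes p q r a b c :: real
  assumes "p \<ge> q" "q \<ge> r" "r \<ge> 0" "a \<ge> 0" "b \<ge> 0" "c \<ge> 0"
    "a^2 \<le> p * q" "b^2 \<le> p * r" "c^2 \<le> q * r"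
  shows "4 * (a+b+c)^2 + (2 * (p-r))^2 \<le> 4 * (p+q+r)^2"
proof -
  have "(a+b+c)^2 \<le> (q+2 * r) * (2 * p+q)" by (rule core_ord[OF assms])
  moreover have "(q+2 * r) * (2 * p+q) + (p-r)^2 = (p+q+r)^2" by (simp add: power2_eq_square algebra_simps)
  ultimately show ?thesis by (simp add: power2_eq_square algebra_simps)
qed

lemma core_sym: fixes d0 d1 d2 m01 m02 m12 :: real
  assumes "d0 \<ge> 0" "d1 \<ge> 0" "d2 \<ge> 0" "m01 \<ge> 0" "m02 \<ge> 0" "m12 \<ge> 0"
    "m01^2 \<le> d0 * d1" "m02^2 \<le> d0 * d2" "m12^2 \<le> d1 * d2"
  shows "4 * (m01+m02+m12)^2 + (\<bar>d0-d1\<bar>+\<bar>d0-d2\<bar>+\<bar>d1-d2\<bar>)^2 \<le> 4 * (d0+d1+d2)^2"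
proof -
  have sw7: "m01^2 \<le> d1 * d0" and sw8: "m02^2 \<le> d2 * d0" and sw9: "m12^2 \<le> d2 * d1"
    using assms(7-9) by (simp_all add: mult.commute)
  have C0: "d1 \<le> d0 \<Longrightarrow> d2 \<le> d1 \<Longrightarrow> ?thesis"
  proof -
    assume h: "d1 \<le> d0" "d2 \<le> d1"
    have X: "4 * (m01+m02+m12)^2 + (2 * (d0-d2))^2 \<le> 4 * (d0+d1+d2)^2"
      by (rule core_ord2[OF h(1) h(2) assms(3) assms(4) assms(5) assms(6) assms(7) assms(8) assms(9)])
    have e1: "\<bar>d0-d1\<bar> = d0-d1" using h by (intro abs_of_nonneg) linarith
    have e2: "\<bar>d0-d2\<bar> = d0-d2" using h by (intro abs_of_nonneg) linarith
    have e3: "\<bar>d1-d2\<bar> = d1-d2" using h by (intro abs_of_nonneg) linarith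
    have E: "\<bar>d0-d1\<bar>+\<bar>d0-d2\<bar>+\<bar>d1-d2\<bar> = 2 * (d0-d2)" unfolding e1 e2 e3 by (simp add: algebra_simps)
    show ?thesis using X unfolding E by (simp only: ac_simps)
  qed
  have C1: "d2 \<le> d0 \<Longrightarrow> d1 \<le> d2 \<Longrightarrow> ?thesis"
  proof -
    assume h: "d2 \<le> d0" "d1 \<le> d2"
    have X: "4 * (m02+m01+m12)^2 + (2 * (d0-d1))^2 \<le> 4 * (d0+d2+d1)^2"
      by (rule core_ord2[OF h(1) h(2) assms(2) assms(5) assms(4) assms(6) assms(8) assms(7) sw9])
    have e1: "\<bar>d0-d1\<bar> = d0-d1" using h by (intro abs_of_nonneg) linarith
    have e2: "\<bar>d0-d2\<bar> = d0-d2" using h by (intro abs_of_nonneg) linarith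
    have e3: "\<bar>d1-d2\<bar> = d2-d1" using h by (subst abs_minus_commute, intro abs_of_nonneg) linarith
    have E: "\<bar>d0-d1\<bar>+\<bar>d0-d2\<bar>+\<bar>d1-d2\<bar> = 2 * (d0-d1)" unfolding e1 e2 e3 by (simp add: algebra_simps)
    show ?thesis using X unfolding E by (simp only: ac_simps)
  qed
  have C2: "d0 \<le> d1 \<Longrightarrow> d2 \<le> d0 \<Longrightarrow> ?thesis"
  proof -
    assume h: "d0 \<le> d1" "d2 \<le> d0"
    have X: "4 * (m01+m12+m02)^2 + (2 * (d1-d2))^2 \<le> 4 * (d1+d0+d2)^2"
      by (rule core_ord2[OF h(1) h(2) assms(3) assms(4) assms(6) assms(5) sw7 assms(9) assms(8)])
    have e1: "\<bar>d0-d1\<bar> = d1-d0" using h by (subst abs_minus_commute, intro abs_of_nonneg) linarith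
    have e2: "\<bar>d0-d2\<bar> = d0-d2" using h by (intro abs_of_nonneg) linarith
    have e3: "\<bar>d1-d2\<bar> = d1-d2" using h by (intro abs_of_nonneg) linarith
    have E: "\<bar>d0-d1\<bar>+\<bar>d0-d2\<bar>+\<bar>d1-d2\<bar> = 2 * (d1-d2)" unfolding e1 e2 e3 by (simp add: algebra_simps)
    show ?thesis using X unfolding E by (simp only: ac_simps)
  qed
  have C3: "d2 \<le> d1 \<Longrightarrow> d0 \<le> d2 \<Longrightarrow> ?thesis"
  proof -
    assume h: "d2 \<le> d1" "d0 \<le> d2"
    have X: "4 * (m12+m01+m02)^2 + (2 * (d1-d0))^2 \<le> 4 * (d1+d2+d0)^2"
      by (rule core_ord2[OF h(1) h(2) assms(1) assms(6) assms(4) assms(5) assms(9) sw7 sw8])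
    have e1: "\<bar>d0-d1\<bar> = d1-d0" using h by (subst abs_minus_commute, intro abs_of_nonneg) linarith
    have e2: "\<bar>d0-d2\<bar> = d2-d0" using h by (subst abs_minus_commute, intro abs_of_nonneg) linarith
    have e3: "\<bar>d1-d2\<bar> = d1-d2" using h by (intro abs_of_nonneg) linarith
    have E: "\<bar>d0-d1\<bar>+\<bar>d0-d2\<bar>+\<bar>d1-d2\<bar> = 2 * (d1-d0)" unfolding e1 e2 e3 by (simp add: algebra_simps)
    show ?thesis using X unfolding E by (simp only: ac_simps)
  qed
  have C4: "d0 \<le> d2 \<Longrightarrow> d1 \<le> d0 \<Longrightarrow> ?thesis"
  proof -
    assume h: "d0 \<le> d2" "d1 \<le> d0"
    have X: "4 * (m02+m12+m01)^2 + (2 * (d2-d1))^2 \<le> 4 * (d2+d0+d1)^2"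
      by (rule core_ord2[OF h(1) h(2) assms(2) assms(5) assms(6) assms(4) sw8 sw9 assms(7)])
    have e1: "\<bar>d0-d1\<bar> = d0-d1" using h by (intro abs_of_nonneg) linarith
    have e2: "\<bar>d0-d2\<bar> = d2-d0" using h by (subst abs_minus_commute, intro abs_of_nonneg) linarith
    have e3: "\<bar>d1-d2\<bar> = d2-d1" using h by (subst abs_minus_commute, intro abs_of_nonneg) linarith
    have E: "\<bar>d0-d1\<bar>+\<bar>d0-d2\<bar>+\<bar>d1-d2\<bar> = 2 * (d2-d1)" unfolding e1 e2 e3 by (simp add: algebra_simps)
    show ?thesis using X unfolding E by (simp only: ac_simps)
  qed
  have C5: "d1 \<le> d2 \<Longrightarrow> d0 \<le> d1 \<Longrightarrow> ?thesis"
  proof -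
    assume h: "d1 \<le> d2" "d0 \<le> d1"
    have X: "4 * (m12+m02+m01)^2 + (2 * (d2-d0))^2 \<le> 4 * (d2+d1+d0)^2"
      by (rule core_ord2[OF h(1) h(2) assms(1) assms(6) assms(5) assms(4) sw9 sw8 sw7])
    have e1: "\<bar>d0-d1\<bar> = d1-d0" using h by (subst abs_minus_commute, intro abs_of_nonneg) linarith
    have e2: "\<bar>d0-d2\<bar> = d2-d0" using h by (subst abs_minus_commute, intro abs_of_nonneg) linarith
    have e3: "\<bar>d1-d2\<bar> = d2-d1" using h by (subst abs_minus_commute, intro abs_of_nonneg) linarith
    have E: "\<bar>d0-d1\<bar>+\<bar>d0-d2\<bar>+\<bar>d1-d2\<bar> = 2 * (d2-d0)" unfolding e1 e2 e3 by (simp add: algebra_simps)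
    show ?thesis using X unfolding E by (simp only: ac_simps)
  qed
  show ?thesis using C0 C1 C2 C3 C4 C5 by (meson linear)
qed



lemma cs2: fixes a b c d :: real
  shows "a * c + b * d \<le> sqrt (a^2+b^2) * sqrt (c^2+d^2)"
proof -
  have "(a * c + b * d)^2 \<le> (a^2+b^2) * (c^2+d^2)"
  proof -
    have "(a^2+b^2) * (c^2+d^2) - (a * c + b * d)^2 = (a * d - b * c)^2" by (simp add: power2_eq_square algebra_simps)
    thus ?thesis by (metis diff_ge_0_iff_ge zero_le_power2)
  qed
  hence "sqrt ((a * c + b * d)^2) \<le> sqrt ((a^2+b^2) * (c^2+d^2))" by (rule real_sqrt_le_mono)
  thus ?thesis by (simp add: real_sqrt_mult)
qed

lemma cm: "x * y + z * w \<le> cmod a * cmod b" if "x = \<bar>Re a\<bar>" "z = \<bar>Im a\<bar>" "y = \<bar>Re b\<bar>" "w = \<bar>Im b\<bar>"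
  using cs2[where a=x and b=z and c=y and d=w] that by (simp add: cmod_def)

lemma two_d: fixes z1 z2 z3 :: complex
  shows "(\<bar>Re z1\<bar>+\<bar>Re z2\<bar>+\<bar>Re z3\<bar>)^2 + (\<bar>Im z1\<bar>+\<bar>Im z2\<bar>+\<bar>Im z3\<bar>)^2 \<le> (cmod z1 + cmod z2 + cmod z3)^2"
proof -
  have h: "\<And>a b. \<bar>Re a\<bar> * \<bar>Re b\<bar> + \<bar>Im a\<bar> * \<bar>Im b\<bar> \<le> cmod a * cmod b" by (rule cm) auto
  have s: "\<And>a. \<bar>Re a\<bar> * \<bar>Re a\<bar> + \<bar>Im a\<bar> * \<bar>Im a\<bar> = cmod a * cmod a"
    by (simp add: cmod_def power2_eq_square[symmetric])
  have "(\<bar>Re z1\<bar>+\<bar>Re z2\<bar>+\<bar>Re z3\<bar>)^2 + (\<bar>Im z1\<bar>+\<bar>Im z2\<bar>+\<bar>Im z3\<bar>)^2 =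
     (\<bar>Re z1\<bar> * \<bar>Re z1\<bar> + \<bar>Im z1\<bar> * \<bar>Im z1\<bar>) + (\<bar>Re z2\<bar> * \<bar>Re z2\<bar> + \<bar>Im z2\<bar> * \<bar>Im z2\<bar>) + (\<bar>Re z3\<bar> * \<bar>Re z3\<bar> + \<bar>Im z3\<bar> * \<bar>Im z3\<bar>)
     + 2 * (\<bar>Re z1\<bar> * \<bar>Re z2\<bar> + \<bar>Im z1\<bar> * \<bar>Im z2\<bar>) + 2 * (\<bar>Re z1\<bar> * \<bar>Re z3\<bar> + \<bar>Im z1\<bar> * \<bar>Im z3\<bar>)
     + 2 * (\<bar>Re z2\<bar> * \<bar>Re z3\<bar> + \<bar>Im z2\<bar> * \<bar>Im z3\<bar>)"
    by (simp add: power2_eq_square algebra_simps)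
  also have "\<dots> \<le> cmod z1 * cmod z1 + cmod z2 * cmod z2 + cmod z3 * cmod z3 + 2 * (cmod z1 * cmod z2)
     + 2 * (cmod z1 * cmod z3) + 2 * (cmod z2 * cmod z3)"
    unfolding s by (intro add_mono mult_left_mono order_refl h) simp_all
  also have "\<dots> = (cmod z1 + cmod z2 + cmod z3)^2" by (simp add: power2_eq_square algebra_simps)
  finally show ?thesis .
qed

lemma sum3: "sum f (UNIV::3 set) = f 0 + f 1 + f 2"
proof -
  have "(3::3) = 0" by simp
  hence U: "(UNIV::3 set) = {0,1,2}" using UNIV_3 by auto
  show ?thesis by (subst U) (simp add: ac_simps)
qed

lemma sum_pair: "sum h (UNIV::('a::finite \<times> 'b::finite) set) = (\<Sum>i\<in>UNIV. \<Sum>j\<in>UNIV. h (i,j))"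
proof -
  have "(\<Sum>i\<in>UNIV. \<Sum>j\<in>UNIV. h (i,j)) = sum (\<lambda>(i,j). h (i,j)) (UNIV \<times> UNIV)"
    by (rule sum.cartesian_product)
  thus ?thesis by (simp add: UNIV_Times_UNIV)
qed

lemma trace_kron: fixes A P :: "complex^'n^'n" and B Q :: "complex^'m^'m"
  shows "trace (kron A B ** kron P Q) = trace (A ** P) * trace (B ** Q)"
proof -
  have "trace (kron A B ** kron P Q) = (\<Sum>i\<in>UNIV. \<Sum>j\<in>UNIV. \<Sum>k\<in>UNIV. \<Sum>l\<in>UNIV.
      (A$i$k * B$j$l) * (P$k$i * Q$l$j))"
    unfolding trace_def matrix_matrix_mult_def kron_def by (simp add: sum_pair)
  also have "\<dots> = (\<Sum>i\<in>UNIV. \<Sum>j\<in>UNIV. \<Sum>k\<in>UNIV. \<Sum>l\<in>UNIV.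
      (A$i$k * P$k$i) * (B$j$l * Q$l$j))"
    by (simp add: mult_ac)
  also have "\<dots> = trace (A ** P) * trace (B ** Q)"
    unfolding trace_def matrix_matrix_mult_def by (simp add: sum_product)
  finally show ?thesis .
qed

lemma ofreal_vec: "(of_real r :: complex^'n) $ i = of_real r"
  by (simp add: of_real_def)

lemma trace_smul: fixes K M :: "complex^'n^'n"
  shows "trace ((of_real r *s K) ** M) = of_real r * trace (K ** M)"
  unfolding trace_def matrix_matrix_mult_def
  by (simp add: vector_scalar_mult_def ofreal_vec sum_distrib_left mult.assoc)

lemma matrix_add_rdistrib': "((A::complex^'n^'n) + B) ** C = A ** C + B ** C"
  by (vector matrix_matrix_mult_def sum.distrib[symmetric] field_simps)

lemma trace_lin: fixes M :: "complex^'n^'n" and N :: nat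
  shows "trace ((\<Sum>k<N. of_real (c k) *s K k) ** M) = (\<Sum>k<N. of_real (c k) * trace (K k ** M))"
  by (induction N) (simp add: trace_def, simp add: matrix_add_rdistrib' trace_add trace_smul)



lemma sum_two: fixes g :: "'n::finite \<Rightarrow> complex"
  assumes "k \<noteq> l"
  shows "(\<Sum>j\<in>UNIV. g j * (if j = k then t else if j = l then s else 0)) = g k * t + g l * s"
proof -
  have "\<And>j. g j * (if j = k then t else if j = l then s else 0) = (if j = k then g k * t else 0) + (if j = l then g l * s else 0)"
    using assms by auto
  thus ?thesis by (simp add: sum.distrib)
qed

lemma sum_two': fixes g :: "'n::finite \<Rightarrow> complex"
  assumes "k \<noteq> l"
  shows "(\<Sum>j\<in>UNIV. (if j = k then t else if j = l then s else 0) * g j) = t * g k + s * g l"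
  using sum_two[OF assms, of g t s] by (simp add: mult.commute)

lemma qf: fixes A :: "complex^'n^'n"
  assumes "k \<noteq> l"
  shows "(\<Sum>i\<in>UNIV. \<Sum>j\<in>UNIV. cnj ((\<chi> j. if j = k then t else if j = l then s else 0) $ i) * A $ i $ j * (\<chi> j. if j = k then t else if j = l then s else 0) $ j)
    = cnj t * A$k$k * t + cnj t * A$k$l * s + cnj s * A$l$k * t + cnj s * A$l$l * s"
proof -
  have "\<And>i. (\<Sum>j\<in>UNIV. cnj ((\<chi> j. if j = k then t else if j = l then s else 0) $ i) * A $ i $ j * (\<chi> j. if j = k then t else if j = l then s else 0) $ j)
     = cnj ((\<chi> j. if j = k then t else if j = l then s else 0) $ i) * (A$i$k * t + A$i$l * s)"
    by (simp add: sum_two[OF assms] sum_distrib_left[symmetric] mult.assoc)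
  hence "(\<Sum>i\<in>UNIV. \<Sum>j\<in>UNIV. cnj ((\<chi> j. if j = k then t else if j = l then s else 0) $ i) * A $ i $ j * (\<chi> j. if j = k then t else if j = l then s else 0) $ j)
    = (\<Sum>i\<in>UNIV. (if i = k then cnj t else if i = l then cnj s else 0) * (A$i$k * t + A$i$l * s))"
    by (intro sum.cong) (auto)
  also have "\<dots> = cnj t * (A$k$k * t + A$k$l * s) + cnj s * (A$l$k * t + A$l$l * s)"
    by (rule sum_two'[OF assms])
  finally show ?thesis by (simp add: algebra_simps)
qed

lemma minor: fixes A :: "complex^'n^'n"
  assumes h: "hermitian_mat A" and p: "psd_mat A" and kl: "k \<noteq> l"
  shows "(cmod (A$k$l))^2 \<le> Re (A$k$k) * Re (A$l$l)" "Re (A$k$k) \<ge> 0"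
proof -
  define a where "a = A$k$l"
  define dk where "dk = Re (A$k$k)"
  define dl where "dl = Re (A$l$l)"
  have Akk: "A$k$k = of_real dk"
  proof -
    have e: "A$k$k = cnj (A$k$k)" using h unfolding hermitian_mat_def by blast
    have "Im (A$k$k) = 0" using arg_cong[OF e, of Im] by simp
    then show ?thesis unfolding dk_def by (simp add: complex_eq_iff)
  qed
  have All: "A$l$l = of_real dl"
  proof -
    have e: "A$l$l = cnj (A$l$l)" using h unfolding hermitian_mat_def by blast
    have "Im (A$l$l) = 0" using arg_cong[OF e, of Im] by simp
    then show ?thesis unfolding dl_def by (simp add: complex_eq_iff)
  qed
  have Alk: "A$l$k = cnj a" using h unfolding hermitian_mat_def a_def by blast
  have Q: "\<And>t s. Re (cnj t * of_real dk * t + cnj t * a * s + cnj s * cnj a * t + cnj s * of_real dl * s) \<ge> 0"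
  proof -
    fix t s
    show "Re (cnj t * of_real dk * t + cnj t * a * s + cnj s * cnj a * t + cnj s * of_real dl * s) \<ge> 0"
      using p[unfolded psd_mat_def, rule_format, of "\<chi> j. if j = k then t else if j = l then s else 0"]
      unfolding qf[OF kl] Akk All Alk a_def[symmetric] by simp
  qed
  have c2: "(cmod a)^2 = (Re a)^2 + (Im a)^2" by (rule cmod_power2)
  have q1: "dl * (dk * dl - (cmod a)^2) \<ge> 0"
  proof -
    have "Re (cnj (of_real dl) * of_real dk * of_real dl + cnj (of_real dl) * a * (- cnj a) + cnj (- cnj a) * cnj a * of_real dl + cnj (- cnj a) * of_real dl * (- cnj a)) = dl * (dk * dl - (cmod a)^2)"
      unfolding c2 by (simp add: power2_eq_square algebra_simps)
    thus ?thesis using Q[of "of_real dl" "- cnj a"] by simp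
  qed
  have q2: "dk * (dk * dl - (cmod a)^2) \<ge> 0"
  proof -
    have "Re (cnj (- a) * of_real dk * (- a) + cnj (- a) * a * of_real dk + cnj (of_real dk) * cnj a * (- a) + cnj (of_real dk) * of_real dl * of_real dk) = dk * (dk * dl - (cmod a)^2)"
      unfolding c2 by (simp add: power2_eq_square algebra_simps)
    thus ?thesis using Q[of "- a" "of_real dk"] by simp
  qed
  have q3: "dk - 2 * (cmod a)^2 + (cmod a)^2 * dl \<ge> 0"
  proof -
    have "Re (cnj 1 * of_real dk * 1 + cnj 1 * a * (- cnj a) + cnj (- cnj a) * cnj a * 1 + cnj (- cnj a) * of_real dl * (- cnj a)) = dk - 2 * (cmod a)^2 + (cmod a)^2 * dl"
      unfolding c2 by (simp add: power2_eq_square algebra_simps)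
    thus ?thesis using Q[of 1 "- cnj a"] by simp
  qed
  have q4: "dk \<ge> 0" using Q[of 1 0] by simp
  have q5: "dl \<ge> 0" using Q[of 0 1] by simp
  show "Re (A$k$k) \<ge> 0" using q4 by (simp add: dk_def)
  have "(cmod a)^2 \<le> dk * dl"
  proof (cases "dl > 0")
    case True
    then show ?thesis using q1 by (simp add: zero_le_mult_iff)
  next
    case f1: False
    show ?thesis
    proof (cases "dk > 0")
      case True
      then show ?thesis using q2 by (simp add: zero_le_mult_iff)
    next
      case False
      then have "dk = 0" "dl = 0" using f1 q4 q5 by auto
      then show ?thesis using q3 by simp
    qed
  qed
  then show "(cmod (A$k$l))^2 \<le> Re (A$k$k) * Re (A$l$l)" by (simp add: a_def dk_def dl_def)
qed


lemma trX0: "trace (A ** pauliX 0) = A$2$1 + A$1$2"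
  by (simp add: pauliX_def embed2_def lo3_def hi3_def trace_def matrix_matrix_mult_def sum3)
lemma trX1: "trace (A ** pauliX 1) = A$2$0 + A$0$2"
  by (simp add: pauliX_def embed2_def lo3_def hi3_def trace_def matrix_matrix_mult_def sum3)
lemma trX2: "trace (A ** pauliX 2) = A$1$0 + A$0$1"
  by (simp add: pauliX_def embed2_def lo3_def hi3_def trace_def matrix_matrix_mult_def sum3)
lemma trY0: "trace (A ** pauliY 0) = \<i> * (A$1$2 - A$2$1)"
  by (simp add: pauliY_def embed2_def lo3_def hi3_def trace_def matrix_matrix_mult_def sum3 algebra_simps)
lemma trY1: "trace (A ** pauliY 1) = \<i> * (A$0$2 - A$2$0)"
  by (simp add: pauliY_def embed2_def lo3_def hi3_def trace_def matrix_matrix_mult_def sum3 algebra_simps)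
lemma trY2: "trace (A ** pauliY 2) = \<i> * (A$0$1 - A$1$0)"
  by (simp add: pauliY_def embed2_def lo3_def hi3_def trace_def matrix_matrix_mult_def sum3 algebra_simps)
lemma trZ0: "trace (A ** pauliZ 0) = A$1$1 - A$2$2"
  by (simp add: pauliZ_def embed2_def lo3_def hi3_def trace_def matrix_matrix_mult_def sum3)
lemma trZ1: "trace (A ** pauliZ 1) = A$0$0 - A$2$2"
  by (simp add: pauliZ_def embed2_def lo3_def hi3_def trace_def matrix_matrix_mult_def sum3)
lemma trZ2: "trace (A ** pauliZ 2) = A$0$0 - A$1$1"
  by (simp add: pauliZ_def embed2_def lo3_def hi3_def trace_def matrix_matrix_mult_def sum3)


lemma herm_cnj: "hermitian_mat A \<Longrightarrow> A$j$i = cnj (A$i$j)"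
  unfolding hermitian_mat_def by (metis complex_cnj_cnj)

lemma diag_real: assumes "hermitian_mat A" shows "A$k$k = of_real (Re (A$k$k))"
proof -
  have e: "A$k$k = cnj (A$k$k)" using assms unfolding hermitian_mat_def by blast
  have "Im (A$k$k) = 0" using arg_cong[OF e, of Im] by simp
  then show ?thesis by (simp add: complex_eq_iff)
qed

lemma cX: "cmod (cnj a + a) = 2 * \<bar>Re a\<bar>"
proof -
  have "cnj a + a = of_real (2 * Re a)" by (simp add: complex_eq_iff)
  thus ?thesis by simp
qed

lemma cY: "cmod (\<i> * (a - cnj a)) = 2 * \<bar>Im a\<bar>"
proof -
  have "\<i> * (a - cnj a) = of_real (- 2 * Im a)" by (simp add: complex_eq_iff)
  thus ?thesis by simp
qed

lemma cZ: "cmod (of_real x - of_real y) = \<bar>x - y\<bar>"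
  by (metis norm_of_real of_real_diff)

lemma fin_arith: fixes M Z D R I :: real
  assumes "4*M^2 + Z^2 \<le> 4*D^2" "R^2+I^2 \<le> M^2" "D = 1"
  shows "(2*R)^2+(2*I)^2+Z^2 \<le> 4"
proof -
  have "(2*R)^2+(2*I)^2 = 4*(R^2+I^2)" by (simp add: power_mult_distrib)
  thus ?thesis using assms by simp
qed

lemma fin_arith2: fixes xa ya za xb yb zb :: real
  assumes "xa^2+ya^2+za^2 \<le> 4" "xb^2+yb^2+zb^2 \<le> 4"
  shows "xa*xb+ya*yb+za*zb \<le> 4"
proof -
  have "(xa-xb)^2+(ya-yb)^2+(za-zb)^2 = (xa^2+ya^2+za^2) + (xb^2+yb^2+zb^2) - 2*(xa*xb+ya*yb+za*zb)"
    by (simp add: power2_eq_square algebra_simps)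
  moreover have "0 \<le> (xa-xb)^2+(ya-yb)^2+(za-zb)^2" by simp
  ultimately show ?thesis using assms by argo
qed

lemma state_bound: fixes A :: "complex^3^3"
  assumes "is_state A"
  shows "(\<Sum>i\<in>UNIV. cmod (trace (A ** pauliX i)))^2 + (\<Sum>i\<in>UNIV. cmod (trace (A ** pauliY i)))^2
       + (\<Sum>i\<in>UNIV. cmod (trace (A ** pauliZ i)))^2 \<le> 4"
proof -
  have h: "hermitian_mat A" and p: "psd_mat A" and t: "trace A = 1" using assms unfolding is_state_def by auto
  define a01 a02 a12 where "a01 = A$0$1" "a02 = A$0$2" "a12 = A$1$2"
  define d0 d1 d2 where "d0 = Re (A$0$0)" "d1 = Re (A$1$1)" "d2 = Re (A$2$2)"
  have H: "A$1$0 = cnj a01" "A$2$0 = cnj a02" "A$2$1 = cnj a12"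
    unfolding a01_a02_a12_def by (rule herm_cnj[OF h])+
  have D: "A$0$0 = of_real d0" "A$1$1 = of_real d1" "A$2$2 = of_real d2"
    unfolding d0_d1_d2_def by (rule diag_real[OF h])+
  have sX: "(\<Sum>i\<in>UNIV. cmod (trace (A ** pauliX i))) = 2 * (\<bar>Re a01\<bar> + \<bar>Re a02\<bar> + \<bar>Re a12\<bar>)"
    unfolding sum3 trX0 trX1 trX2 H a01_a02_a12_def[symmetric] cX by simp
  have sY: "(\<Sum>i\<in>UNIV. cmod (trace (A ** pauliY i))) = 2 * (\<bar>Im a01\<bar> + \<bar>Im a02\<bar> + \<bar>Im a12\<bar>)"
    unfolding sum3 trY0 trY1 trY2 H a01_a02_a12_def[symmetric] cY by simp
  have sZ: "(\<Sum>i\<in>UNIV. cmod (trace (A ** pauliZ i))) = \<bar>d0-d1\<bar>+\<bar>d0-d2\<bar>+\<bar>d1-d2\<bar>"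
    unfolding sum3 trZ0 trZ1 trZ2 D cZ by simp
  have tr: "d0 + d1 + d2 = 1"
  proof -
    have "trace A = A$0$0 + A$1$1 + A$2$2" unfolding trace_def sum3 by simp
    hence "Re (trace A) = d0 + d1 + d2" unfolding d0_d1_d2_def by simp
    thus ?thesis using t by simp
  qed
  have "(0::3) \<noteq> 1" "(0::3) \<noteq> 2" "(1::3) \<noteq> 2" by simp_all
  note m = minor[OF h p this(1)] minor[OF h p this(2)] minor[OF h p this(3)]
  have m01: "(cmod a01)^2 \<le> d0 * d1" and m02: "(cmod a02)^2 \<le> d0 * d2" and m12: "(cmod a12)^2 \<le> d1 * d2"
    using m unfolding a01_a02_a12_def d0_d1_d2_def by auto
  have "(2::3) \<noteq> 1" by simp
  note m2 = minor(2)[OF h p this]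
  have dpos: "d0 \<ge> 0" "d1 \<ge> 0" "d2 \<ge> 0" using m m2 unfolding d0_d1_d2_def by auto
  have core: "4 * (cmod a01 + cmod a02 + cmod a12)^2 + (\<bar>d0-d1\<bar>+\<bar>d0-d2\<bar>+\<bar>d1-d2\<bar>)^2 \<le> 4 * (d0+d1+d2)^2"
    by (rule core_sym[OF dpos norm_ge_zero norm_ge_zero norm_ge_zero m01 m02 m12])
  have td: "(\<bar>Re a01\<bar>+\<bar>Re a02\<bar>+\<bar>Re a12\<bar>)^2 + (\<bar>Im a01\<bar>+\<bar>Im a02\<bar>+\<bar>Im a12\<bar>)^2 \<le> (cmod a01 + cmod a02 + cmod a12)^2"
    by (rule two_d)
  show ?thesis unfolding sX sY sZ by (rule fin_arith[OF core td tr])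
qed

lemma sum3prod: fixes a b c d e f :: "'i \<Rightarrow> real"
  shows "(\<Sum>i\<in>I. \<Sum>j\<in>J. a i * b j + c i * d j + e i * f j) = sum a I * sum b J + sum c I * sum d J + sum e I * sum f J"
  by (simp only: sum.distrib sum_product)

lemma prod_bound: fixes A B :: "complex^3^3"
  assumes "is_state A" "is_state B"
  shows "(\<Sum>i\<in>UNIV. \<Sum>j\<in>UNIV.
            cmod (trace (A ** pauliX i)) * cmod (trace (B ** pauliX j))
          + cmod (trace (A ** pauliY i)) * cmod (trace (B ** pauliY j))
          + cmod (trace (A ** pauliZ i)) * cmod (trace (B ** pauliZ j))) \<le> 4"
proof -
  define xa ya za where "xa = (\<Sum>i\<in>UNIV. cmod (trace (A ** pauliX i)))"
     "ya = (\<Sum>i\<in>UNIV. cmod (trace (A ** pauliY i)))" "za = (\<Sum>i\<in>UNIV. cmod (trace (A ** pauliZ i)))"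
  define xb yb zb where "xb = (\<Sum>i\<in>UNIV. cmod (trace (B ** pauliX i)))"
     "yb = (\<Sum>i\<in>UNIV. cmod (trace (B ** pauliY i)))" "zb = (\<Sum>i\<in>UNIV. cmod (trace (B ** pauliZ i)))"
  have "(\<Sum>i\<in>UNIV. \<Sum>j\<in>UNIV.
            cmod (trace (A ** pauliX i)) * cmod (trace (B ** pauliX j))
          + cmod (trace (A ** pauliY i)) * cmod (trace (B ** pauliY j))
          + cmod (trace (A ** pauliZ i)) * cmod (trace (B ** pauliZ j))) = xa * xb + ya * yb + za * zb"
    unfolding xa_ya_za_def xb_yb_zb_def by (rule sum3prod)
  moreover have "xa^2 + ya^2 + za^2 \<le> 4" unfolding xa_ya_za_def by (rule state_bound[OF assms(1)])
  moreover have "xb^2 + yb^2 + zb^2 \<le> 4" unfolding xb_yb_zb_def by (rule state_bound[OF assms(2)])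
  ultimately show ?thesis using fin_arith2 by simp
qed

lemma sep_term: fixes A B :: "nat \<Rightarrow> complex^3^3" and P Q :: "complex^3^3"
  assumes "\<forall>k<N. p k \<ge> 0"
  shows "cmod (trace ((\<Sum>k<N. of_real (p k) *s kron (A k) (B k)) ** kron P Q))
     \<le> (\<Sum>k<N. p k * (cmod (trace (A k ** P)) * cmod (trace (B k ** Q))))"
proof -
  have "cmod (trace ((\<Sum>k<N. of_real (p k) *s kron (A k) (B k)) ** kron P Q))
      = cmod (\<Sum>k<N. of_real (p k) * (trace (A k ** P) * trace (B k ** Q)))"
    by (simp add: trace_lin trace_kron)
  also have "\<dots> \<le> (\<Sum>k<N. cmod (of_real (p k) * (trace (A k ** P) * trace (B k ** Q))))"
    by (rule norm_sum)
  also have "\<dots> = (\<Sum>k<N. p k * (cmod (trace (A k ** P)) * cmod (trace (B k ** Q))))"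
    using assms by (intro sum.cong) (auto simp: norm_mult)
  finally show ?thesis .
qed

theorem mainTheorem17:
  fixes \<rho> :: "complex^(3 \<times> 3)^(3 \<times> 3)"
  assumes "separable \<rho>"
  shows "(\<Sum>i\<in>(UNIV::3 set). \<Sum>j\<in>(UNIV::3 set).
            cmod (trace (\<rho> ** kron (pauliX i) (pauliX j)))
          + cmod (trace (\<rho> ** kron (pauliY i) (pauliY j)))
          + cmod (trace (\<rho> ** kron (pauliZ i) (pauliZ j)))) \<le> 4"
proof -
  obtain N :: nat and p :: "nat \<Rightarrow> real" and A B :: "nat \<Rightarrow> complex^3^3" where st: "\<forall>k<N. p k \<ge> 0 \<and> is_state (A k) \<and> is_state (B k)"
    and ps: "(\<Sum>k<N. p k) = 1"
    and rho: "\<rho> = (\<Sum>k<N. of_real (p k) *s kron (A k) (B k))"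
    using assms unfolding separable_def by blast
  have pn: "\<forall>k<N. p k \<ge> 0" using st by blast
  define F where "F = (\<lambda>k i j. cmod (trace (A k ** pauliX i)) * cmod (trace (B k ** pauliX j))
          + cmod (trace (A k ** pauliY i)) * cmod (trace (B k ** pauliY j))
          + cmod (trace (A k ** pauliZ i)) * cmod (trace (B k ** pauliZ j)))"
  have "(\<Sum>i\<in>(UNIV::3 set). \<Sum>j\<in>(UNIV::3 set).
            cmod (trace (\<rho> ** kron (pauliX i) (pauliX j)))
          + cmod (trace (\<rho> ** kron (pauliY i) (pauliY j)))
          + cmod (trace (\<rho> ** kron (pauliZ i) (pauliZ j))))
     \<le> (\<Sum>i\<in>(UNIV::3 set). \<Sum>j\<in>(UNIV::3 set). \<Sum>k<N. p k * F k i j)"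
  proof (intro sum_mono)
    fix i j :: 3
    show "cmod (trace (\<rho> ** kron (pauliX i) (pauliX j)))
          + cmod (trace (\<rho> ** kron (pauliY i) (pauliY j)))
          + cmod (trace (\<rho> ** kron (pauliZ i) (pauliZ j))) \<le> (\<Sum>k<N. p k * F k i j)"
    proof -
      have E: "(\<Sum>k<N. p k * F k i j) = (\<Sum>k<N. p k * (cmod (trace (A k ** pauliX i)) * cmod (trace (B k ** pauliX j))))
         + (\<Sum>k<N. p k * (cmod (trace (A k ** pauliY i)) * cmod (trace (B k ** pauliY j))))
         + (\<Sum>k<N. p k * (cmod (trace (A k ** pauliZ i)) * cmod (trace (B k ** pauliZ j))))"
        unfolding F_def by (simp only: distrib_left sum.distrib)
      have tX: "cmod (trace (\<rho> ** kron (pauliX i) (pauliX j))) \<le> (\<Sum>k<N. p k * (cmod (trace (A k ** pauliX i)) * cmod (trace (B k ** pauliX j))))"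
        unfolding rho by (rule sep_term[OF pn])
      have tY: "cmod (trace (\<rho> ** kron (pauliY i) (pauliY j))) \<le> (\<Sum>k<N. p k * (cmod (trace (A k ** pauliY i)) * cmod (trace (B k ** pauliY j))))"
        unfolding rho by (rule sep_term[OF pn])
      have tZ: "cmod (trace (\<rho> ** kron (pauliZ i) (pauliZ j))) \<le> (\<Sum>k<N. p k * (cmod (trace (A k ** pauliZ i)) * cmod (trace (B k ** pauliZ j))))"
        unfolding rho by (rule sep_term[OF pn])
      show ?thesis unfolding E by (intro add_mono tX tY tZ)
    qed
  qed
  also have "\<dots> = (\<Sum>i\<in>(UNIV::3 set). \<Sum>k<N. \<Sum>j\<in>(UNIV::3 set). p k * F k i j)"
    by (rule sum.cong[OF refl], rule sum.swap)
  also have "\<dots> = (\<Sum>k<N. \<Sum>i\<in>(UNIV::3 set). \<Sum>j\<in>(UNIV::3 set). p k * F k i j)"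
    by (rule sum.swap)
  also have "\<dots> = (\<Sum>k<N. p k * (\<Sum>i\<in>(UNIV::3 set). \<Sum>j\<in>(UNIV::3 set). F k i j))"
    by (simp only: sum_distrib_left)
  also have "\<dots> \<le> (\<Sum>k<N. p k * 4)"
  proof (rule sum_mono)
    fix k assume "k \<in> {..<N}"
    with st have "p k \<ge> 0" "is_state (A k)" "is_state (B k)" by auto
    then show "p k * (\<Sum>i\<in>(UNIV::3 set). \<Sum>j\<in>(UNIV::3 set). F k i j) \<le> p k * 4"
      unfolding F_def by (intro mult_left_mono prod_bound) simp_all
  qed
  also have "\<dots> = 4" using ps by (simp add: sum_distrib_right[symmetric])
  finally show ?thesis .
qed

end
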